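(* Let $\mathcal{A}\subset\mathbb{Z}$ be a finite alphabet, let $G=(V,E)$ be a finite directed graph with edge labelling $\ell:E\to\mathcal{A}$ whose adjacency matrix $M=\sum_{a\in\mathcal{A}}M_a$ is primitive, let $\beta>1$ be a Pisot number, and let $\phi^+:\mathcal{K}^+\to\mathbb{R}$ be as in the context. Then $\phi^+(\mathcal{K}^+)$ is finite if and only if for every vertex $v\in V$ there exists $c(v)\in\mathbb{R}$ such that for every path $e_1e_2\ldots e_n$ ($n\ge1$) in $G$ connecting $v$ to itself, $$c(v)=\frac{1}{1-\beta^{-n}}\sum_{k=1}^n\frac{\ell(e_k)}{\beta^k}.$$
   Context: For $a\in\mathcal{A}$, $M_a$ is the $V\times V$ matrix with $(M_a)_{ij}=1$ if $(i,j)\in E$ and $\ell((i,j))=a$, and $0$ otherwise. A path is a sequence of edges with the terminal vertex of $e_j$ equal to the initial vertex of $e_{j+1}$; it connects the initial vertex of $e_1$ to the terminal vertex of $e_n$. $\mathcal{K}^+\subseteq\mathcal{A}^{\mathbb{N}}$ is the set of sequences $(\ell(e_k))_{k\ge1}$ for infinite paths $e_1e_2\ldots$ in $G$. A Pisot number is an algebraic integer $>1$ all of whose other Galois conjugates have modulus $<1$ (integers $\ge2$ included). $\phi^+((x_k)_{k\ge1})=\sum_{k\ge1}x_k\beta^{-k}$. *)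

theory Defs
  imports "HOL-Analysis.Analysis" "HOL-Computational_Algebra.Polynomial"
begin

type_synonym 'v edge = "'v \<times> 'v"

definition label_matrix :: "'v edge set \<Rightarrow> ('v edge \<Rightarrow> int) \<Rightarrow> int \<Rightarrow> 'v \<Rightarrow> 'v \<Rightarrow> nat" where
  "label_matrix E l a i j = (if (i, j) \<in> E \<and> l (i, j) = a then 1 else 0)"

definition adj_matrix :: "int set \<Rightarrow> 'v edge set \<Rightarrow> ('v edge \<Rightarrow> int) \<Rightarrow> 'v \<Rightarrow> 'v \<Rightarrow> nat" where
  "adj_matrix A E l i j = (\<Sum>a\<in>A. label_matrix E l a i j)"

fun mat_pow :: "'v set \<Rightarrow> ('v \<Rightarrow> 'v \<Rightarrow> nat) \<Rightarrow> nat \<Rightarrow> 'v \<Rightarrow> 'v \<Rightarrow> nat" where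
  "mat_pow V M 0 i j = (if i = j then 1 else 0)"
| "mat_pow V M (Suc n) i j = (\<Sum>m\<in>V. mat_pow V M n i m * M m j)"

definition primitive_matrix :: "'v set \<Rightarrow> ('v \<Rightarrow> 'v \<Rightarrow> nat) \<Rightarrow> bool" where
  "primitive_matrix V M \<longleftrightarrow> (\<exists>k\<ge>1. \<forall>i\<in>V. \<forall>j\<in>V. mat_pow V M k i j > 0)"

definition pisot :: "real \<Rightarrow> bool" where
  "pisot \<beta> \<longleftrightarrow> \<beta> > 1 \<and>
     (\<exists>p :: int poly. lead_coeff p = 1 \<and> irreducible p \<and>
        poly (map_poly of_int p) \<beta> = 0 \<and>
        (\<forall>z :: complex. poly (map_poly of_int p) z = 0 \<and> z \<noteq> complex_of_real \<beta> \<longrightarrow> cmod z < 1))"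

text \<open>Infinite paths e_1 e_2 ... in G, indexed from 0 (e 0 = e_1).\<close>
definition inf_path :: "'v edge set \<Rightarrow> (nat \<Rightarrow> 'v edge) \<Rightarrow> bool" where
  "inf_path E e \<longleftrightarrow> (\<forall>k. e k \<in> E \<and> snd (e k) = fst (e (Suc k)))"

text \<open>K^+: label sequences of infinite paths (index 0 holds x_1).\<close>
definition Kplus :: "'v edge set \<Rightarrow> ('v edge \<Rightarrow> int) \<Rightarrow> (nat \<Rightarrow> int) set" where
  "Kplus E l = {(\<lambda>k. l (e k)) | e. inf_path E e}"

text \<open>phi^+(x) = sum_{k>=1} x_k beta^{-k}, with x_k stored at index k-1.\<close>
definition phi_plus :: "real \<Rightarrow> (nat \<Rightarrow> int) \<Rightarrow> real" where
  "phi_plus \<beta> x = (\<Sum>k. real_of_int (x k) / \<beta> ^ Suc k)"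

definition fin_path :: "'v edge set \<Rightarrow> 'v edge list \<Rightarrow> 'v \<Rightarrow> 'v \<Rightarrow> bool" where
  "fin_path E es v w \<longleftrightarrow> es \<noteq> [] \<and> set es \<subseteq> E \<and>
     (\<forall>i. Suc i < length es \<longrightarrow> snd (es ! i) = fst (es ! Suc i)) \<and>
     fst (hd es) = v \<and> snd (last es) = w"

end

theory Submission
  imports Defs
begin


definition ps :: "real \<Rightarrow> (nat \<Rightarrow> int) \<Rightarrow> nat \<Rightarrow> real" where
  "ps \<beta> x m = (\<Sum>k<m. real_of_int (x k) / \<beta> ^ Suc k)"

lemma ps_add: "ps \<beta> x (m + r) = ps \<beta> x m + ps \<beta> (\<lambda>k. x (k + m)) r / \<beta> ^ m"
proof (induction r)
  case 0 then show ?case by (simp add: ps_def)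
next
  case (Suc r)
  have "ps \<beta> x (m + Suc r) = ps \<beta> x (m + r) + x (m + r) / \<beta> ^ Suc (m + r)"
    by (simp add: ps_def)
  also have "\<dots> = ps \<beta> x m + (ps \<beta> (\<lambda>k. x (k + m)) r + x (r + m) / \<beta> ^ Suc r) / \<beta> ^ m"
    using Suc by (simp add: add_divide_distrib power_add add.commute)
  also have "\<dots> = ps \<beta> x m + ps \<beta> (\<lambda>k. x (k + m)) (Suc r) / \<beta> ^ m"
    by (simp add: ps_def)
  finally show ?case .
qed

lemma summ_bound:
  fixes B :: real
  assumes "\<beta> > 1" "\<And>k. \<bar>real_of_int (x k)\<bar> \<le> B"
  shows "summable (\<lambda>k. real_of_int (x k) / \<beta> ^ Suc k)"
    and "\<bar>phi_plus \<beta> x\<bar> \<le> (\<Sum>k. B * (1/\<beta>) ^ k)"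
proof -
  have g: "summable (\<lambda>k. B * (1/\<beta>) ^ k)"
    using assms(1) by (intro summable_mult summable_geometric) auto
  have le: "norm (real_of_int (x k) / \<beta> ^ Suc k) \<le> B * (1/\<beta>) ^ k" for k
  proof -
    have "norm (real_of_int (x k) / \<beta> ^ Suc k) = \<bar>x k\<bar> / \<beta> ^ Suc k"
      using assms(1) by (simp add: abs_divide)
    also have "\<dots> \<le> B / \<beta> ^ Suc k"
      using assms by (intro divide_right_mono) (auto simp: of_int_le_iff)
    also have "\<dots> \<le> B / \<beta> ^ k"
      using assms(1) assms(2)[of 0] 
      by (intro divide_left_mono) (auto intro!: power_increasing mult_pos_pos)
    finally show ?thesis by (simp add: power_one_over)
  qed
  show s: "summable (\<lambda>k. real_of_int (x k) / \<beta> ^ Suc k)"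
    by (rule summable_comparison_test[OF _ g]) (use le in auto)
  have sa: "summable (\<lambda>k. \<bar>real_of_int (x k) / \<beta> ^ Suc k\<bar>)"
    by (rule summable_comparison_test[OF _ g]) (use le in auto)
  have "\<bar>phi_plus \<beta> x\<bar> \<le> (\<Sum>k. \<bar>real_of_int (x k) / \<beta> ^ Suc k\<bar>)"
    unfolding phi_plus_def by (rule summable_rabs[OF sa])
  also have "\<dots> \<le> (\<Sum>k. B * (1/\<beta>) ^ k)"
    by (rule suminf_le[OF _ sa g]) (use le in auto)
  finally show "\<bar>phi_plus \<beta> x\<bar> \<le> (\<Sum>k. B * (1/\<beta>) ^ k)" .
qed

lemma phi_shift:
  fixes B :: real
  assumes "\<beta> > 1" "\<And>k. \<bar>real_of_int (x k)\<bar> \<le> B"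
  shows "phi_plus \<beta> x = ps \<beta> x m + phi_plus \<beta> (\<lambda>k. x (k + m)) / \<beta> ^ m"
proof -
  have s: "summable (\<lambda>k. real_of_int (x k) / \<beta> ^ Suc k)" using summ_bound[of \<beta> x B] assms by blast
  have s2: "summable (\<lambda>k. real_of_int (x (k + m)) / \<beta> ^ Suc k)"
    using summ_bound(1)[of \<beta> "\<lambda>k. x (k + m)" B] assms by simp
  have "phi_plus \<beta> x = (\<Sum>n. real_of_int (x (n + m)) / \<beta> ^ Suc (n + m)) + ps \<beta> x m"
    unfolding phi_plus_def ps_def using suminf_split_initial_segment[OF s, of m] by simp
  also have "(\<lambda>n. real_of_int (x (n + m)) / \<beta> ^ Suc (n + m)) = (\<lambda>n. real_of_int (x (n + m)) / \<beta> ^ Suc n / \<beta> ^ m)"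
    by (simp add: power_add mult.assoc)
  also have "(\<Sum>n. real_of_int (x (n + m)) / \<beta> ^ Suc n / \<beta> ^ m) = phi_plus \<beta> (\<lambda>k. x (k + m)) / \<beta> ^ m"
    unfolding phi_plus_def using suminf_divide[OF s2, of "\<beta> ^ m"] by simp
  finally show ?thesis by simp
qed



lemma fin_path_append:
  assumes "fin_path E p a b" "fin_path E q b c"
  shows "fin_path E (p @ q) a c"
proof -
  have links: "snd ((p@q) ! i) = fst ((p@q) ! Suc i)" if "Suc i < length (p@q)" for i
  proof (cases "Suc i < length p")
    case True then show ?thesis using assms(1) by (simp add: fin_path_def nth_append)
  next
    case False
    show ?thesis
    proof (cases "Suc i = length p")
      case True
      have "i = length p - 1" using True by simp
      then have "p ! i = last p" using assms(1) by (simp add: fin_path_def last_conv_nth)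
      moreover have "q ! 0 = hd q" using assms(2) by (simp add: fin_path_def hd_conv_nth)
      ultimately show ?thesis using True assms by (simp add: fin_path_def nth_append)
    next
      case F2: False
      then have "i - length p + 1 < length q" "Suc (i - length p) = Suc i - length p"
        using False that by auto
      then show ?thesis using False F2 assms(2) unfolding fin_path_def
        by (auto simp: nth_append)
    qed
  qed
  show ?thesis using assms links unfolding fin_path_def by auto
qed

definition vl :: "real \<Rightarrow> ('v edge \<Rightarrow> int) \<Rightarrow> 'v edge list \<Rightarrow> real" where
  "vl \<beta> l es = ps \<beta> (\<lambda>k. l (es ! k)) (length es)"

lemma vl_append: "vl \<beta> l (p @ q) = vl \<beta> l p + vl \<beta> l q / \<beta> ^ length p"
proof -
  have "vl \<beta> l (p @ q) = ps \<beta> (\<lambda>k. l ((p@q) ! k)) (length p + length q)"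
    by (simp add: vl_def)
  also have "\<dots> = ps \<beta> (\<lambda>k. l ((p@q) ! k)) (length p) + ps \<beta> (\<lambda>k. l ((p@q) ! (k + length p))) (length q) / \<beta> ^ length p"
    by (rule ps_add)
  also have "ps \<beta> (\<lambda>k. l ((p@q) ! k)) (length p) = vl \<beta> l p"
    unfolding vl_def ps_def by (rule sum.cong) (auto simp: nth_append)
  also have "ps \<beta> (\<lambda>k. l ((p@q) ! (k + length p))) (length q) = vl \<beta> l q"
    unfolding vl_def ps_def by (rule sum.cong) (auto simp: nth_append)
  finally show ?thesis .
qed

lemma mat_pow_path:
  assumes "E \<subseteq> V \<times> V" "\<forall>e\<in>E. l e \<in> A" "finite A"
  shows "mat_pow V (adj_matrix A E l) n i j > 0 \<Longrightarrow> n \<ge> 1 \<Longrightarrow> \<exists>es. fin_path E es i j"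
proof (induction n arbitrary: j)
  case 0 then show ?case by simp
next
  case (Suc n)
  have "\<exists>m\<in>V. mat_pow V (adj_matrix A E l) n i m * adj_matrix A E l m j \<noteq> 0"
  proof (rule ccontr)
    assume "\<not> ?thesis"
    then have "mat_pow V (adj_matrix A E l) (Suc n) i j = 0"
      by (simp del: mat_pow.simps(1) add: sum.neutral)
    then show False using Suc.prems(1) by simp
  qed
  then obtain m where m: "m \<in> V" "mat_pow V (adj_matrix A E l) n i m > 0" "adj_matrix A E l m j > 0"
    by auto
  have mj: "(m, j) \<in> E"
  proof (rule ccontr)
    assume "(m, j) \<notin> E"
    then have "adj_matrix A E l m j = 0" by (simp add: adj_matrix_def label_matrix_def)
    then show False using m(3) by simp
  qed
  have single: "fin_path E [(m, j)] m j" using mj by (simp add: fin_path_def)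
  show ?case
  proof (cases "n = 0")
    case True
    then have "m = i" using m(2) by (simp split: if_splits)
    then show ?thesis using single by blast
  next
    case False
    then obtain es where "fin_path E es i m" using Suc.IH[OF m(2)] by auto
    then show ?thesis using fin_path_append[OF _ single] by blast
  qed
qed



lemma per_inf_path:
  assumes "fin_path E w v v"
  shows "inf_path E (\<lambda>k. w ! (k mod length w))"
proof -
  have ne: "w \<noteq> []" and sub: "set w \<subseteq> E" using assms by (auto simp: fin_path_def)
  have n: "length w > 0" using ne by simp
  have "snd (w ! (k mod length w)) = fst (w ! (Suc k mod length w))" for k
  proof (cases "Suc (k mod length w) = length w")
    case True
    then have "k mod length w = length w - 1" by simp
    then have "w ! (k mod length w) = last w" using ne by (simp add: last_conv_nth)
    moreover have "w ! 0 = hd w" using ne by (simp add: hd_conv_nth)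
    ultimately show ?thesis using True assms by (simp add: mod_Suc fin_path_def)
  next
    case False
    then have "Suc (k mod length w) < length w" using n mod_less_divisor[OF n, of k] by linarith
    then show ?thesis using False assms by (simp add: mod_Suc fin_path_def)
  qed
  moreover have "w ! (k mod length w) \<in> E" for k using sub n by auto
  ultimately show ?thesis by (simp add: inf_path_def)
qed

lemma inf_path_bound:
  assumes "inf_path E e" "finite E"
  shows "\<bar>real_of_int (l (e k))\<bar> \<le> (\<Sum>x\<in>E. \<bar>real_of_int (l x)\<bar>)"
proof -
  have "e k \<in> E" using assms by (simp add: inf_path_def)
  then show ?thesis using assms(2) by (intro member_le_sum) auto
qed

lemma phi_per_mult:
  fixes B :: real
  assumes "\<beta> > 1" "\<And>k. \<bar>real_of_int (x k)\<bar> \<le> B" "\<And>k. x (k + n) = x k"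
  shows "phi_plus \<beta> x = ps \<beta> x n + phi_plus \<beta> x / \<beta> ^ n"
  using phi_shift[of \<beta> x B n] assms by simp

lemma phi_per_val:
  fixes B :: real
  assumes "\<beta> > 1" "\<And>k. \<bar>real_of_int (x k)\<bar> \<le> B" "\<And>k. x (k + n) = x k" "n > 0"
  shows "phi_plus \<beta> x = 1 / (1 - \<beta> powi (- int n)) * ps \<beta> x n"
proof -
  have h: "phi_plus \<beta> x = ps \<beta> x n + phi_plus \<beta> x / \<beta> ^ n" using phi_per_mult[of \<beta> x B n] assms by blast
  have "\<beta> ^ n > 1" using assms(1,4) by (simp add: one_less_power)
  then have "1 - \<beta> powi (- int n) \<noteq> 0"
    by (simp add: power_int_minus)
  moreover have "phi_plus \<beta> x * (1 - \<beta> powi (- int n)) = ps \<beta> x n"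
    using h \<open>\<beta> ^ n > 1\<close> by (simp add: power_int_minus field_simps)
  ultimately show ?thesis by (simp add: field_simps)
qed



definition fv :: "real \<Rightarrow> ('v edge \<Rightarrow> int) \<Rightarrow> 'v edge list \<Rightarrow> real" where
  "fv \<beta> l es = 1 / (1 - \<beta> powi (- int (length es))) *
            (\<Sum>k<length es. real_of_int (l (es ! k)) / \<beta> ^ Suc k)"

lemma fv_alt: "\<beta> \<noteq> 0 \<Longrightarrow> fv \<beta> l es = vl \<beta> l es / (1 - 1 / \<beta> ^ length es)"
  by (simp add: fv_def vl_def ps_def power_int_minus divide_inverse)

lemma cyc_phi:
  assumes "\<beta> > 1" "finite E" "fin_path E w v v"
  shows "phi_plus \<beta> (\<lambda>k. l (w ! (k mod length w))) = fv \<beta> l w"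
proof -
  have ip: "inf_path E (\<lambda>k. w ! (k mod length w))" by (rule per_inf_path[OF assms(3)])
  have n: "length w > 0" using assms(3) by (simp add: fin_path_def)
  have "phi_plus \<beta> (\<lambda>k. l (w ! (k mod length w))) = 1 / (1 - \<beta> powi (- int (length w))) * ps \<beta> (\<lambda>k. l (w ! (k mod length w))) (length w)"
    using phi_per_val[of \<beta> "\<lambda>k. l (w ! (k mod length w))" "\<Sum>x\<in>E. \<bar>real_of_int (l x)\<bar>" "length w"]
      assms(1) n inf_path_bound[OF ip assms(2), of l] by simp
  also have "ps \<beta> (\<lambda>k. l (w ! (k mod length w))) (length w) = (\<Sum>k<length w. real_of_int (l (w ! k)) / \<beta> ^ Suc k)"
    unfolding ps_def by (rule sum.cong) auto
  finally show ?thesis by (simp add: fv_def)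
qed

lemma forward:
  assumes b: "\<beta> > 1" and fE: "finite E" and fin: "finite (phi_plus \<beta> ` Kplus E l)"
    and w1: "fin_path E w1 v v" and w2: "fin_path E w2 v v"
  shows "fv \<beta> l w1 = fv \<beta> l w2"
proof (rule ccontr)
  assume neq: "fv \<beta> l w1 \<noteq> fv \<beta> l w2"
  define n1 where "n1 = length w1"
  define n2 where "n2 = length w2"
  define x1 where "x1 = (\<lambda>k. l (w1 ! (k mod n1)))"
  define x2 where "x2 = (\<lambda>k. l (w2 ! (k mod n2)))"
  define c1 where "c1 = phi_plus \<beta> x1"
  define c2 where "c2 = phi_plus \<beta> x2"
  have c1: "c1 = fv \<beta> l w1" using cyc_phi[OF b fE w1] by (simp add: c1_def x1_def n1_def)
  have c2: "c2 = fv \<beta> l w2" using cyc_phi[OF b fE w2] by (simp add: c2_def x2_def n2_def)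
  have n1: "n1 > 0" using w1 by (simp add: fin_path_def n1_def)
  have n2: "n2 > 0" using w2 by (simp add: fin_path_def n2_def)
  have P1: "inf_path E (\<lambda>k. w1 ! (k mod n1))" using per_inf_path[OF w1] by (simp add: n1_def)
  have P2: "inf_path E (\<lambda>k. w2 ! (k mod n2))" using per_inf_path[OF w2] by (simp add: n2_def)
  define e where "e = (\<lambda>j k. if k < j * n1 then w1 ! (k mod n1) else w2 ! ((k - j * n1) mod n2))"
  define B where "B = (\<Sum>x\<in>E. \<bar>real_of_int (l x)\<bar>)"
  have ipe: "inf_path E (e j)" for j
  proof -
    have "e j k \<in> E" for k using P1 P2 by (simp add: e_def inf_path_def)
    moreover have "snd (e j k) = fst (e j (Suc k))" for k
    proof -
      consider "Suc k < j * n1" | "Suc k = j * n1" | "k \<ge> j * n1" by linarith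
      then show ?thesis
      proof cases
        case 1 then show ?thesis using P1 by (simp add: e_def inf_path_def)
      next
        case 2
        have "snd (w1 ! (k mod n1)) = fst (w1 ! (Suc k mod n1))" using P1 by (simp add: inf_path_def)
        also have "Suc k mod n1 = 0" using 2 by simp
        also have "fst (w1 ! 0) = v" using w1 hd_conv_nth[of w1] by (simp add: fin_path_def)
        finally have "snd (e j k) = v" using 2 by (simp add: e_def)
        moreover have "fst (e j (Suc k)) = v" using 2 w2 n2 hd_conv_nth[of w2] by (simp add: e_def fin_path_def)
        ultimately show ?thesis by simp
      next
        case 3
        then have "Suc k - j * n1 = Suc (k - j * n1)" by simp
        then show ?thesis using 3 P2 by (simp add: e_def inf_path_def)
      qed
    qed
    ultimately show ?thesis by (simp add: inf_path_def)
  qed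
  have bnd: "\<And>k. \<bar>real_of_int (l (e j k))\<bar> \<le> B" for j
    using inf_path_bound[OF ipe fE] by (simp add: B_def)
  have bnd1: "\<And>k. \<bar>real_of_int (x1 k)\<bar> \<le> B"
    using inf_path_bound[OF P1 fE] by (simp add: B_def x1_def)
  define g where "g = (\<lambda>j::nat. c1 + (c2 - c1) / \<beta> ^ (j * n1))"
  have ge: "g j = phi_plus \<beta> (\<lambda>k. l (e j k))" for j
  proof -
    have "phi_plus \<beta> (\<lambda>k. l (e j k)) = ps \<beta> (\<lambda>k. l (e j k)) (j * n1) + phi_plus \<beta> (\<lambda>k. l (e j (k + j * n1))) / \<beta> ^ (j * n1)"
      by (rule phi_shift[OF b bnd])
    also have "(\<lambda>k. l (e j (k + j * n1))) = x2" by (simp add: e_def x2_def)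
    also have "ps \<beta> (\<lambda>k. l (e j k)) (j * n1) = ps \<beta> x1 (j * n1)"
      unfolding ps_def by (rule sum.cong) (auto simp: e_def x1_def)
    also have "ps \<beta> x1 (j * n1) = c1 - c1 / \<beta> ^ (j * n1)"
    proof -
      have "c1 = ps \<beta> x1 (j * n1) + phi_plus \<beta> (\<lambda>k. x1 (k + j * n1)) / \<beta> ^ (j * n1)"
        unfolding c1_def by (rule phi_shift[OF b bnd1])
      also have "(\<lambda>k. x1 (k + j * n1)) = x1" by (simp add: x1_def)
      finally have h: "c1 = ps \<beta> x1 (j * n1) + phi_plus \<beta> x1 / \<beta> ^ (j * n1)" .
      from h show ?thesis unfolding c1_def[symmetric] by linarith
    qed
    finally have h: "phi_plus \<beta> (\<lambda>k. l (e j k)) = c1 - c1 / \<beta> ^ (j * n1) + phi_plus \<beta> x2 / \<beta> ^ (j * n1)" .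
    from h show ?thesis unfolding c2_def[symmetric] g_def by (simp add: diff_divide_distrib)
  qed
  have "inj g"
  proof (rule injI)
    fix i j assume "g i = g j"
    then have "(c2 - c1) / \<beta> ^ (i * n1) = (c2 - c1) / \<beta> ^ (j * n1)" by (simp add: g_def)
    then have "\<beta> ^ (i * n1) = \<beta> ^ (j * n1)" using neq c1 c2 b by (simp add: divide_cancel_left)
    then have "i * n1 = j * n1" using b power_inject_exp by blast
    then show "i = j" using n1 by simp
  qed
  then have "infinite (range g)" by (rule range_inj_infinite)
  moreover have "range g \<subseteq> phi_plus \<beta> ` Kplus E l"
  proof
    fix y assume "y \<in> range g"
    then obtain j where "y = g j" by blast
    moreover have "(\<lambda>k. l (e j k)) \<in> Kplus E l" unfolding Kplus_def using ipe[of j] by blast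
    ultimately show "y \<in> phi_plus \<beta> ` Kplus E l" using ge[of j] by blast
  qed
  ultimately show False using fin finite_subset by blast
qed



lemma star:
  assumes b: "\<beta> > 1"
    and conn: "\<forall>u\<in>V. \<forall>v\<in>V. \<exists>es. fin_path E es u v"
    and C: "\<forall>v\<in>V. \<forall>es. fin_path E es v v \<longrightarrow> C v = fv \<beta> l es"
    and v: "v \<in> V" and u: "u \<in> V" and p: "fin_path E p v u"
  shows "C v = vl \<beta> l p + C u / \<beta> ^ length p"
proof -
  obtain q where q: "fin_path E q u v" using conn u v by blast
  have pq: "fin_path E (p @ q) v v" by (rule fin_path_append[OF p q])
  have qp: "fin_path E (q @ p) u u" by (rule fin_path_append[OF q p])
  define a where "a = \<beta> ^ length p"
  define c where "c = \<beta> ^ length q"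
  have a: "a > 1" using p b by (simp add: a_def fin_path_def one_less_power)
  have c: "c > 1" using q b by (simp add: c_def fin_path_def one_less_power)
  have ac: "a * c > 1" using a c by (metis less_1_mult)
  have Cv: "C v = (vl \<beta> l p + vl \<beta> l q / a) / (1 - 1 / (a * c))"
    using C v pq b by (simp add: fv_alt vl_append a_def c_def power_add)
  have Cu: "C u = (vl \<beta> l q + vl \<beta> l p / c) / (1 - 1 / (a * c))"
    using C u qp b by (simp add: fv_alt vl_append a_def c_def power_add mult.commute)
  have "C v = vl \<beta> l p + C u / a"
    unfolding Cv Cu using a c ac by (simp add: field_simps)
  then show ?thesis by (simp add: a_def)
qed

lemma backward:
  assumes b: "\<beta> > 1" and fE: "finite E" and fV: "finite V" and EV: "E \<subseteq> V \<times> V"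
    and conn: "\<forall>u\<in>V. \<forall>v\<in>V. \<exists>es. fin_path E es u v"
    and C: "\<forall>v\<in>V. \<forall>es. fin_path E es v v \<longrightarrow> C v = fv \<beta> l es"
  shows "phi_plus \<beta> ` Kplus E l \<subseteq> C ` V"
proof
  fix y assume "y \<in> phi_plus \<beta> ` Kplus E l"
  then obtain e where ip: "inf_path E e" and y: "y = phi_plus \<beta> (\<lambda>k. l (e k))"
    unfolding Kplus_def by blast
  define x where "x = (\<lambda>k. l (e k))"
  define B where "B = (\<Sum>x\<in>E. \<bar>real_of_int (l x)\<bar>)"
  define K where "K = (\<Sum>k. B * (1/\<beta>) ^ k)"
  define Cm where "Cm = (\<Sum>w\<in>V. \<bar>C w\<bar>)"
  have inV: "fst (e k) \<in> V" for k
  proof -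
    have "e k \<in> E" using ip by (simp add: inf_path_def)
    then show ?thesis using EV by (cases "e k") auto
  qed
  define v where "v = fst (e 0)"
  have key: "\<bar>phi_plus \<beta> x - C v\<bar> * \<beta> ^ m \<le> K + Cm" if m: "m \<ge> 1" for m
  proof -
    define pm where "pm = map e [0..<m]"
    have len: "length pm = m" by (simp add: pm_def)
    have fp: "fin_path E pm v (fst (e m))"
    proof -
      have "snd (e (m - 1)) = fst (e m)" using ip m unfolding inf_path_def
        by (metis Suc_diff_1 less_le_trans zero_less_one)
      moreover have "last pm = e (m - 1)" using m by (simp add: pm_def last_map)
      moreover have "hd pm = e 0" using m by (simp add: pm_def hd_map)
      ultimately show ?thesis using ip m unfolding fin_path_def inf_path_def v_def pm_def
        by auto
    qed
    have vlpm: "vl \<beta> l pm = ps \<beta> x m"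
      unfolding vl_def ps_def len by (rule sum.cong) (auto simp: pm_def x_def)
    have st: "C v = ps \<beta> x m + C (fst (e m)) / \<beta> ^ m"
      using star[OF b conn C _ inV fp] inV[of 0] vlpm len by (simp add: v_def)
    have bx: "\<And>k. \<bar>real_of_int (x (k + m))\<bar> \<le> B"
      using inf_path_bound[OF ip fE] by (simp add: x_def B_def)
    have bx0: "\<And>k. \<bar>real_of_int (x k)\<bar> \<le> B"
      using inf_path_bound[OF ip fE] by (simp add: x_def B_def)
    have sh: "phi_plus \<beta> x = ps \<beta> x m + phi_plus \<beta> (\<lambda>k. x (k + m)) / \<beta> ^ m"
      by (rule phi_shift[OF b bx0])
    have b1: "\<bar>phi_plus \<beta> (\<lambda>k. x (k + m))\<bar> \<le> K"
      using summ_bound(2)[of \<beta> "\<lambda>k. x (k + m)" B] b bx by (simp add: K_def)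
    have b2: "\<bar>C (fst (e m))\<bar> \<le> Cm"
      unfolding Cm_def using inV[of m] fV by (intro member_le_sum) auto
    have pos: "\<beta> ^ m > 0" using b by simp
    have "(phi_plus \<beta> x - C v) * \<beta> ^ m = phi_plus \<beta> (\<lambda>k. x (k + m)) - C (fst (e m))"
    proof -
      have "phi_plus \<beta> x - C v = (phi_plus \<beta> (\<lambda>k. x (k + m)) - C (fst (e m))) / \<beta> ^ m"
        using sh st by (simp add: diff_divide_distrib)
      then show ?thesis using pos b by simp
    qed
    then have "\<bar>phi_plus \<beta> x - C v\<bar> * \<beta> ^ m = \<bar>phi_plus \<beta> (\<lambda>k. x (k + m)) - C (fst (e m))\<bar>"
      using pos by (metis abs_mult abs_of_pos)
    also have "\<dots> \<le> K + Cm" using b1 b2 by linarith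
    finally show ?thesis .
  qed
  have "phi_plus \<beta> x = C v"
  proof (rule ccontr)
    assume ne: "phi_plus \<beta> x \<noteq> C v"
    define d where "d = \<bar>phi_plus \<beta> x - C v\<bar>"
    have d: "d > 0" using ne by (simp add: d_def)
    obtain n where n: "(K + Cm) / d < \<beta> ^ n" using real_arch_pow[OF b] by blast
    have "\<beta> ^ n \<le> \<beta> ^ Suc n" using b by simp
    moreover have "K + Cm < d * \<beta> ^ n" using n d by (simp add: field_simps)
    ultimately have "K + Cm < d * \<beta> ^ Suc n"
      using d by (smt (verit) mult_left_mono)
    moreover have "d * \<beta> ^ Suc n \<le> K + Cm" using key[of "Suc n"] by (simp add: d_def)
    ultimately show False by simp
  qed
  then show "y \<in> C ` V" using y inV[of 0] by (simp add: x_def v_def)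
qed


theorem theorem7:
  fixes A :: "int set" and V :: "'v set" and E :: "'v edge set"
    and l :: "'v edge \<Rightarrow> int" and \<beta> :: real
  assumes "finite A" and "finite V" and "E \<subseteq> V \<times> V"
    and "\<forall>e\<in>E. l e \<in> A"
    and "primitive_matrix V (adj_matrix A E l)"
    and "pisot \<beta>"
  shows "finite (phi_plus \<beta> ` Kplus E l) \<longleftrightarrow>
    (\<forall>v\<in>V. \<exists>c :: real. \<forall>es. fin_path E es v v \<longrightarrow>
        c = 1 / (1 - \<beta> powi (- int (length es))) *
            (\<Sum>k<length es. real_of_int (l (es ! k)) / \<beta> ^ Suc k))"
proof -
  have b: "\<beta> > 1" using assms(6) by (simp add: pisot_def)
  have fE: "finite E" using assms(2,3) finite_subset by blast
  obtain k where k: "k \<ge> 1" "\<forall>i\<in>V. \<forall>j\<in>V. mat_pow V (adj_matrix A E l) k i j > 0"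
    using assms(5) unfolding primitive_matrix_def by blast
  have conn: "\<forall>u\<in>V. \<forall>v\<in>V. \<exists>es. fin_path E es u v"
    using mat_pow_path[OF assms(3,4,1)] k by blast
  show ?thesis
  proof
    assume fin: "finite (phi_plus \<beta> ` Kplus E l)"
    show "\<forall>v\<in>V. \<exists>c :: real. \<forall>es. fin_path E es v v \<longrightarrow>
        c = 1 / (1 - \<beta> powi (- int (length es))) *
            (\<Sum>k<length es. real_of_int (l (es ! k)) / \<beta> ^ Suc k)"
    proof
      fix v assume "v \<in> V"
      show "\<exists>c :: real. \<forall>es. fin_path E es v v \<longrightarrow>
        c = 1 / (1 - \<beta> powi (- int (length es))) *
            (\<Sum>k<length es. real_of_int (l (es ! k)) / \<beta> ^ Suc k)"
      proof (cases "\<exists>w. fin_path E w v v")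
        case True
        then obtain w where w: "fin_path E w v v" by blast
        show ?thesis
          by (rule exI[of _ "fv \<beta> l w"])
            (use forward[OF b fE fin w] in \<open>auto simp: fv_def\<close>)
      next
        case False then show ?thesis by blast
      qed
    qed
  next
    assume "\<forall>v\<in>V. \<exists>c :: real. \<forall>es. fin_path E es v v \<longrightarrow>
        c = 1 / (1 - \<beta> powi (- int (length es))) *
            (\<Sum>k<length es. real_of_int (l (es ! k)) / \<beta> ^ Suc k)"
    then obtain C where C: "\<forall>v\<in>V. \<forall>es. fin_path E es v v \<longrightarrow> C v = fv \<beta> l es"
      unfolding fv_def by metis
    have "phi_plus \<beta> ` Kplus E l \<subseteq> C ` V"
      by (rule backward[OF b fE assms(2,3) conn C])
    then show "finite (phi_plus \<beta> ` Kplus E l)"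
      using assms(2) finite_subset by blast
  qed
qed

end
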